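(* Let $\alpha\neq0$ and consider the control system on $G$ $\dot x=u\alpha x,\quad \dot y=x-1,\quad u\in\mathcal U.$ If $(x_1,y_1),(x_2,y_2)\in G$ satisfy $x_1<1<x_2$, then $(x_2,y_2)\in\mathcal O^+(x_1,y_1)$ and $(x_1,y_1)\in\mathcal O^+(x_2,y_2)$.
   Context: Let $G=\{(x,y)\in\mathbb{R}^2:x>0\}$. Fix $\Omega=[u_*,u^*]$ with $u_*<0<u^*$. The admissible controls $\mathcal U$ are the piecewise constant functions $\mathbb{R}\to\Omega$. We write $\varphi(t,p,u)$ for the solution starting at $p$, and $\mathcal O^+(p)=\{\varphi(t,p,u):t\ge0,u\in\mathcal U\}$. *)

theory Defs
  imports "HOL-Analysis.Analysis"
begin

definition G :: "(real \<times> real) set" where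
  "G = {(x, y). x > 0}"

definition piecewise_constant :: "(real \<Rightarrow> real) \<Rightarrow> bool" where
  "piecewise_constant u \<longleftrightarrow>
     (\<forall>a b. \<exists>S. finite S \<and>
        (\<forall>s t. a \<le> s \<and> s \<le> t \<and> t \<le> b \<and> {s..t} \<inter> S = {} \<longrightarrow> u s = u t))"

definition admissible :: "real set \<Rightarrow> (real \<Rightarrow> real) \<Rightarrow> bool" where
  "admissible \<Omega> u \<longleftrightarrow> piecewise_constant u \<and> range u \<subseteq> \<Omega>"

definition is_solution ::
  "((real \<times> real) \<Rightarrow> real \<Rightarrow> (real \<times> real)) \<Rightarrow> (real \<Rightarrow> real) \<Rightarrow> real \<Rightarrow> (real \<Rightarrow> real \<times> real) \<Rightarrow> bool" where
  "is_solution F u T \<gamma> \<longleftrightarrow>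
     continuous_on {0..T} \<gamma> \<and> \<gamma> ` {0..T} \<subseteq> G \<and>
     (\<exists>S. finite S \<and>
        (\<forall>t\<in>{0..T} - S. (\<gamma> has_vector_derivative F (\<gamma> t) (u t)) (at t within {0..T})))"

definition pos_orbit ::
  "real set \<Rightarrow> ((real \<times> real) \<Rightarrow> real \<Rightarrow> (real \<times> real)) \<Rightarrow> real \<times> real \<Rightarrow> (real \<times> real) set" where
  "pos_orbit \<Omega> F p =
     {\<gamma> T | \<gamma> T u. T \<ge> 0 \<and> admissible \<Omega> u \<and> is_solution F u T \<gamma> \<and> \<gamma> 0 = p}"

definition sysF :: "real \<Rightarrow> (real \<times> real) \<Rightarrow> real \<Rightarrow> (real \<times> real)" where
  "sysF \<alpha> p u = (u * \<alpha> * fst p, fst p - 1)"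

end

theory Submission
  imports Defs
begin

lemma comp_deriv:
  assumes "(f has_real_derivative f') (at t)" "(g has_real_derivative g') (at t)"
  shows "((\<lambda>t. (f t, g t)) has_vector_derivative (f', g')) (at t)"
  using assms by (intro has_vector_derivative_Pair) (simp_all add: has_real_derivative_iff_has_vector_derivative)

lemma reach:
  fixes \<Omega> :: "real set"
  assumes xa: "xa > 0" and xb: "xb > 0" and k: "k = c * \<alpha>" and c: "c \<in> \<Omega>" and z: "0 \<in> \<Omega>"
    and tau: "\<tau> > 0" and ex: "xa * exp (k * \<tau>) = xb" and sgn: "(xa - 1) * (xb - 1) < 0"
  shows "(xb, yb) \<in> pos_orbit \<Omega> (sysF \<alpha>) (xa, ya)"
proof -
  have k0: "k \<noteq> 0" using ex sgn by auto
  define D where "D = (xa * (exp (k*\<tau>) - 1) / k - \<tau>)"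
  define R where "R = yb - ya - D"
  define a where "a = max 0 (R / (xa - 1))"
  define b where "b = max 0 (R / (xb - 1))"
  have a0: "a \<ge> 0" and b0: "b \<ge> 0" unfolding a_def b_def by auto
  have ab: "(xa - 1) * a + (xb - 1) * b = R"
  proof (cases "xa < 1")
    case True
    then have "xb > 1" using sgn by (smt (verit) mult_nonpos_nonpos)
    then show ?thesis using True unfolding a_def b_def
      by (cases "R \<ge> 0") (auto simp: max_def field_simps divide_le_0_iff zero_le_divide_iff)
  next
    case False
    then have "xa > 1" "xb < 1" using sgn
      by (smt (verit) mult_nonneg_nonneg mult_nonpos_nonpos)+
    then show ?thesis unfolding a_def b_def
      by (cases "R \<ge> 0") (auto simp: max_def field_simps divide_le_0_iff zero_le_divide_iff)
  qed
  define s where "s t = max 0 (min (t - a) \<tau>)" for t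
  define \<gamma> where "\<gamma> t = (xa * exp (k * s t), ya + (xa - 1) * min t a + (xa * (exp (k * s t) - 1) / k - s t)
        + (xb - 1) * max 0 (t - a - \<tau>))" for t
  define u where "u t = (if a < t \<and> t < a + \<tau> then c else 0)" for t
  define T where "T = a + \<tau> + b"
  have T0: "T \<ge> 0" using a0 b0 tau T_def by auto
  have \<gamma>0: "\<gamma> 0 = (xa, ya)" using a0 tau unfolding \<gamma>_def s_def by auto
  have \<gamma>T: "\<gamma> T = (xb, yb)"
  proof -
    have "s T = \<tau>" using b0 tau unfolding s_def T_def by auto
    moreover have "min T a = a" "max 0 (T - a - \<tau>) = b" using b0 tau unfolding T_def by auto
    ultimately show ?thesis using ex ab unfolding \<gamma>_def R_def D_def by (auto simp: algebra_simps)
  qed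
  have adm: "admissible \<Omega> u"
    unfolding admissible_def piecewise_constant_def
  proof (intro conjI allI)
    fix p q :: real
    show "\<exists>S. finite S \<and> (\<forall>s t. p \<le> s \<and> s \<le> t \<and> t \<le> q \<and> {s..t} \<inter> S = {} \<longrightarrow> u s = u t)"
    proof (intro exI[of _ "{a, a+\<tau>}"] conjI allI impI)
      fix s t assume h: "p \<le> s \<and> s \<le> t \<and> t \<le> q \<and> {s..t} \<inter> {a, a + \<tau>} = {}"
      then have "\<not> (s \<le> a \<and> a \<le> t)" "\<not> (s \<le> a + \<tau> \<and> a + \<tau> \<le> t)" by auto
      then show "u s = u t" using h unfolding u_def by auto
    qed simp
  next
    show "range u \<subseteq> \<Omega>" using c z unfolding u_def by auto
  qed
  have cont: "continuous_on {0..T} \<gamma>"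
    unfolding \<gamma>_def s_def using k0 by (intro continuous_intros) auto
  have inG: "\<gamma> ` {0..T} \<subseteq> G" using xa unfolding G_def \<gamma>_def by auto
  have der: "(\<gamma> has_vector_derivative sysF \<alpha> (\<gamma> t) (u t)) (at t within {0..T})"
    if t: "t \<in> {0..T} - {a, a + \<tau>}" for t
  proof -
    have "(\<gamma> has_vector_derivative sysF \<alpha> (\<gamma> t) (u t)) (at t)"
    proof (cases "t < a")
      case True
      have e: "(\<lambda>y. (xa, ya + (xa - 1) * y)) y = \<gamma> y" if "y \<in> {..<a}" for y
        using that tau unfolding \<gamma>_def s_def by auto
      have "((\<lambda>y. (xa, ya + (xa - 1) * y)) has_vector_derivative (0, xa - 1)) (at t)"
        by (intro comp_deriv derivative_eq_intros) auto
      from has_vector_derivative_transform_within_open[OF this open_lessThan _ e] True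
      have "(\<gamma> has_vector_derivative (0, xa - 1)) (at t)" by auto
      moreover have "sysF \<alpha> (\<gamma> t) (u t) = (0, xa - 1)"
        using True e[of t] unfolding sysF_def u_def by (auto simp flip: e)
      ultimately show ?thesis by simp
    next
      case False
      then have ta: "t > a" using t by auto
      show ?thesis
      proof (cases "t < a + \<tau>")
        case True
        let ?g = "\<lambda>y. (xa * exp (k * (y - a)), ya + (xa - 1) * a + (xa * (exp (k * (y - a)) - 1) / k - (y - a)))"
        have e: "?g y = \<gamma> y" if "y \<in> {a<..<a+\<tau>}" for y
          using that unfolding \<gamma>_def s_def by auto
        have "(?g has_vector_derivative (xa * (exp (k * (t - a)) * k), xa * exp (k * (t - a)) - 1)) (at t)"
        proof (rule comp_deriv)
          show "((\<lambda>y. xa * exp (k * (y - a))) has_real_derivative xa * (exp (k * (t - a)) * k)) (at t)"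
            by (auto intro!: derivative_eq_intros)
          have d1: "((\<lambda>x. xa * (exp (k * (x - a)) - 1)) has_real_derivative xa * (exp (k * (t - a)) * k)) (at t)"
            by (auto intro!: derivative_eq_intros)
          have "((\<lambda>y. ya + (xa - 1) * a + (xa * (exp (k * (y - a)) - 1) / k - (y - a))) has_real_derivative
             0 + (xa * (exp (k * (t - a)) * k) / k - (1 - 0))) (at t)"
            by (rule DERIV_add[OF DERIV_const DERIV_diff[OF DERIV_cdivide[OF d1] DERIV_diff[OF DERIV_ident DERIV_const]]])
          then show "((\<lambda>y. ya + (xa - 1) * a + (xa * (exp (k * (y - a)) - 1) / k - (y - a))) has_real_derivative
             xa * exp (k * (t - a)) - 1) (at t)" using k0 by (simp add: add.assoc)
        qed
        from has_vector_derivative_transform_within_open[OF this open_greaterThanLessThan _ e] True ta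
        have "(\<gamma> has_vector_derivative (xa * (exp (k * (t - a)) * k), xa * exp (k * (t - a)) - 1)) (at t)" by auto
        moreover have "sysF \<alpha> (\<gamma> t) (u t) = (xa * (exp (k * (t - a)) * k), xa * exp (k * (t - a)) - 1)"
          using True ta e[of t] k unfolding sysF_def u_def by (auto simp flip: e)
        ultimately show ?thesis by simp
      next
        case False
        then have tb: "t > a + \<tau>" using t by auto
        let ?g = "\<lambda>y. (xb, ya + (xa - 1) * a + D + (xb - 1) * (y - a - \<tau>))"
        have e: "?g y = \<gamma> y" if "y \<in> {a+\<tau><..}" for y
          using that tau ex unfolding \<gamma>_def s_def D_def by auto
        have "(?g has_vector_derivative (0, xb - 1)) (at t)"
          by (intro comp_deriv derivative_eq_intros) auto
        from has_vector_derivative_transform_within_open[OF this open_greaterThan _ e] tb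
        have "(\<gamma> has_vector_derivative (0, xb - 1)) (at t)" by auto
        moreover have "sysF \<alpha> (\<gamma> t) (u t) = (0, xb - 1)"
          using tb e[of t] unfolding sysF_def u_def by (auto simp flip: e)
        ultimately show ?thesis by simp
      qed
    qed
    then show ?thesis by (rule has_vector_derivative_at_within)
  qed
  have "is_solution (sysF \<alpha>) u T \<gamma>"
    unfolding is_solution_def
    by (intro conjI cont inG exI[of _ "{a, a + \<tau>}"] ballI der) auto
  then have "\<gamma> T \<in> pos_orbit \<Omega> (sysF \<alpha>) (xa, ya)"
    unfolding pos_orbit_def using T0 adm \<gamma>0 by blast
  then show ?thesis using \<gamma>T by simp
qed

theorem mainTheorem6:
  fixes \<alpha> u_lo u_hi x1 y1 x2 y2 :: real
  assumes "u_lo < 0" and "0 < u_hi" and "\<alpha> \<noteq> 0"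
    and "(x1, y1) \<in> G" and "(x2, y2) \<in> G"
    and "x1 < 1" and "1 < x2"
  shows "(x2, y2) \<in> pos_orbit {u_lo..u_hi} (sysF \<alpha>) (x1, y1)
       \<and> (x1, y1) \<in> pos_orbit {u_lo..u_hi} (sysF \<alpha>) (x2, y2)"
proof -
  have x1: "x1 > 0" and x2: "x2 > 0" using assms(4,5) unfolding G_def by auto
  have sg: "(x1 - 1) * (x2 - 1) < 0" "(x2 - 1) * (x1 - 1) < 0"
    using assms(6,7) by (simp_all add: mult_neg_pos mult_pos_neg)
  have z: "0 \<in> {u_lo..u_hi}" using assms(1,2) by auto
  obtain cp where cp: "cp \<in> {u_lo..u_hi}" "cp * \<alpha> > 0"
  proof (cases "\<alpha> > 0")
    case True then show ?thesis using that[of u_hi] assms by auto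
  next
    case False then have "\<alpha> < 0" using assms(3) by auto
    then show ?thesis using that[of u_lo] assms by (auto intro: mult_neg_neg)
  qed
  obtain cn where cn: "cn \<in> {u_lo..u_hi}" "cn * \<alpha> < 0"
  proof (cases "\<alpha> > 0")
    case True then show ?thesis using that[of u_lo] assms by (auto intro: mult_neg_pos)
  next
    case False then have "\<alpha> < 0" using assms(3) by auto
    then show ?thesis using that[of u_hi] assms by (auto intro: mult_pos_neg)
  qed
  have l1: "ln (x2 / x1) > 0" using x1 x2 assms(6,7) by simp
  have l2: "ln (x1 / x2) < 0" using x1 x2 assms(6,7) by simp
  have A: "(x2, y2) \<in> pos_orbit {u_lo..u_hi} (sysF \<alpha>) (x1, y1)"
  proof (rule reach[OF x1 x2 refl cp(1) z _ _ sg(1)])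
    show "ln (x2 / x1) / (cp * \<alpha>) > 0" using l1 cp(2) by simp
    show "x1 * exp (cp * \<alpha> * (ln (x2 / x1) / (cp * \<alpha>))) = x2"
      using cp(2) x1 x2 by (cases "cp = 0"; cases "\<alpha> = 0") auto
  qed
  have B: "(x1, y1) \<in> pos_orbit {u_lo..u_hi} (sysF \<alpha>) (x2, y2)"
  proof (rule reach[OF x2 x1 refl cn(1) z _ _ sg(2)])
    show "ln (x1 / x2) / (cn * \<alpha>) > 0" using l2 cn(2) by (simp add: divide_neg_neg)
    show "x2 * exp (cn * \<alpha> * (ln (x1 / x2) / (cn * \<alpha>))) = x1"
      using cn(2) x1 x2 by (cases "cn = 0"; cases "\<alpha> = 0") auto
  qed
  show ?thesis using A B by simp
qed

end
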